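(* Let $G$ be the fundamental solution of the wave or heat equation and $T>0$. For any $\alpha\in(-1,1)$ and any $h\in\mathbb{R}$, $$\int_0^T\int_{\mathbb{R}}(1-\cos(\xi h))|\mathcal{F}G_t(\xi)|^2|\xi|^{\alpha}d\xi\,dt\le\begin{cases}CT|h|^{1-\alpha}&\text{wave equation},\\ C|h|^{1-\alpha}&\text{heat equation},\end{cases}$$ where $C=\int_{\mathbb{R}}(1-\cos\eta)|\eta|^{\alpha-2}d\eta$.
   Context: Wave: $\mathcal{F}G_t(\xi)=\sin(t|\xi|)/|\xi|$. Heat: $\mathcal{F}G_t(\xi)=e^{-t|\xi|^2/2}$. *)

theory Defs
  imports "HOL-Analysis.Analysis"
begin

definition FG_wave :: "real \<Rightarrow> real \<Rightarrow> real" where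
  "FG_wave t \<xi> = sin (t * \<bar>\<xi>\<bar>) / \<bar>\<xi>\<bar>"

definition FG_heat :: "real \<Rightarrow> real \<Rightarrow> real" where
  "FG_heat t \<xi> = exp (- t * \<xi>\<^sup>2 / 2)"

definition incr_integral :: "(real \<Rightarrow> real \<Rightarrow> real) \<Rightarrow> real \<Rightarrow> real \<Rightarrow> real \<Rightarrow> ennreal" where
  "incr_integral FG T \<alpha> h =
     (\<integral>\<^sup>+ t\<in>{0..T}. (\<integral>\<^sup>+ \<xi>. ennreal ((1 - cos (\<xi> * h)) * \<bar>FG t \<xi>\<bar>\<^sup>2 * \<bar>\<xi>\<bar> powr \<alpha>) \<partial>lborel) \<partial>lborel)"

definition C_const :: "real \<Rightarrow> ennreal" where
  "C_const \<alpha> = (\<integral>\<^sup>+ \<eta>. ennreal ((1 - cos \<eta>) * \<bar>\<eta>\<bar> powr (\<alpha> - 2)) \<partial>lborel)"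

end

theory Submission
  imports Defs
begin

lemma scale:
  fixes h \<alpha> :: real assumes h: "h \<noteq> 0"
  shows "(\<integral>\<^sup>+\<xi>. ennreal ((1 - cos (\<xi> * h)) * \<bar>\<xi>\<bar> powr (\<alpha> - 2)) \<partial>lborel)
     = C_const \<alpha> * ennreal (\<bar>h\<bar> powr (1 - \<alpha>))"
proof -
  let ?J = "(\<integral>\<^sup>+\<xi>. ennreal ((1 - cos (\<xi> * h)) * \<bar>\<xi>\<bar> powr (\<alpha> - 2)) \<partial>lborel)"
  have "C_const \<alpha> = ennreal \<bar>h\<bar> * (\<integral>\<^sup>+x. ennreal ((1 - cos (0 + h*x)) * \<bar>0 + h*x\<bar> powr (\<alpha> - 2)) \<partial>lborel)"
    unfolding C_const_def
    by (rule nn_integral_real_affine[OF _ h]) measurable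
  also have "(\<integral>\<^sup>+x. ennreal ((1 - cos (0 + h*x)) * \<bar>0 + h*x\<bar> powr (\<alpha> - 2)) \<partial>lborel)
      = (\<integral>\<^sup>+x. ennreal (\<bar>h\<bar> powr (\<alpha> - 2)) * ennreal ((1 - cos (x * h)) * \<bar>x\<bar> powr (\<alpha> - 2)) \<partial>lborel)"
    by (intro nn_integral_cong) (simp add: ennreal_mult'[symmetric] abs_mult powr_mult mult.commute mult.left_commute)
  also have "\<dots> = ennreal (\<bar>h\<bar> powr (\<alpha> - 2)) * ?J"
    by (rule nn_integral_cmult) measurable
  finally have C0: "C_const \<alpha> = ennreal \<bar>h\<bar> * ennreal (\<bar>h\<bar> powr (\<alpha> - 2)) * ?J"
    by (simp add: mult.assoc)
  have e: "\<bar>h\<bar> * \<bar>h\<bar> powr (\<alpha> - 2) = \<bar>h\<bar> powr (\<alpha> - 1)"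
    using h by (simp add: powr_add[symmetric] powr_mult_base)
  have C: "C_const \<alpha> = ennreal (\<bar>h\<bar> powr (\<alpha> - 1)) * ?J"
    unfolding C0 e[symmetric] by (simp add: ennreal_mult')
  have "C_const \<alpha> * ennreal (\<bar>h\<bar> powr (1 - \<alpha>)) = ennreal (\<bar>h\<bar> powr (\<alpha> - 1) * \<bar>h\<bar> powr (1 - \<alpha>)) * ?J"
    unfolding C by (simp add: ennreal_mult' mult_ac)
  also have "\<bar>h\<bar> powr (\<alpha> - 1) * \<bar>h\<bar> powr (1 - \<alpha>) = 1"
    using h by (simp add: powr_add[symmetric])
  finally show ?thesis by simp
qed

lemma wave:
  fixes T \<alpha> h :: real assumes T: "T > 0"
  shows "incr_integral FG_wave T \<alpha> h \<le> (\<integral>\<^sup>+\<xi>. ennreal ((1 - cos (\<xi> * h)) * \<bar>\<xi>\<bar> powr (\<alpha> - 2)) \<partial>lborel) * ennreal T"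
proof -
  let ?J = "(\<integral>\<^sup>+\<xi>. ennreal ((1 - cos (\<xi> * h)) * \<bar>\<xi>\<bar> powr (\<alpha> - 2)) \<partial>lborel)"
  have pw: "ennreal ((1 - cos (\<xi> * h)) * \<bar>FG_wave t \<xi>\<bar>\<^sup>2 * \<bar>\<xi>\<bar> powr \<alpha>)
      \<le> ennreal ((1 - cos (\<xi> * h)) * \<bar>\<xi>\<bar> powr (\<alpha> - 2))" for t \<xi>
  proof (cases "\<xi> = 0")
    case True then show ?thesis by simp
  next
    case False
    have c: "0 \<le> 1 - cos (\<xi> * h)" by simp
    have "\<bar>FG_wave t \<xi>\<bar>\<^sup>2 * \<bar>\<xi>\<bar> powr \<alpha> = (sin (t * \<bar>\<xi>\<bar>))\<^sup>2 * (\<bar>\<xi>\<bar> powr \<alpha> / \<xi>\<^sup>2)"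
      using False by (simp add: FG_wave_def power_divide)
    also have "\<dots> \<le> 1 * (\<bar>\<xi>\<bar> powr \<alpha> / \<xi>\<^sup>2)"
      by (intro mult_right_mono) (auto simp: abs_square_le_1)
    also have "\<dots> = \<bar>\<xi>\<bar> powr (\<alpha> - 2)"
      using False by (simp add: powr_diff)
    finally show ?thesis
      by (intro ennreal_leI) (simp add: mult.assoc mult_left_mono[OF _ c])
  qed
  have "incr_integral FG_wave T \<alpha> h \<le> (\<integral>\<^sup>+t. ?J * indicator {0..T} t \<partial>lborel)"
    unfolding incr_integral_def
    by (intro nn_integral_mono mult_right_mono nn_integral_mono pw) auto
  also have "\<dots> = ?J * ennreal T"
    using T by (subst nn_integral_cmult_indicator) auto
  finally show ?thesis .
qed

lemma expint:
  fixes T x :: real assumes T: "T > 0" and x: "x \<noteq> 0"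
  shows "(\<integral>\<^sup>+t. ennreal (exp (- t * x\<^sup>2)) * indicator {0..T} t \<partial>lborel) = ennreal ((1 - exp (- T * x\<^sup>2)) / x\<^sup>2)"
proof -
  have x2: "x\<^sup>2 \<noteq> 0" using x by simp
  have "((\<lambda>t. exp (- t * x\<^sup>2)) has_integral ((- exp (- T * x\<^sup>2) / x\<^sup>2) - (- exp (- 0 * x\<^sup>2) / x\<^sup>2))) {0..T}"
  proof (rule fundamental_theorem_of_calculus)
    show "0 \<le> T" using T by simp
    fix t assume "t \<in> {0..T}"
    have "((\<lambda>t. - exp (- t * x\<^sup>2) / x\<^sup>2) has_real_derivative exp (- t * x\<^sup>2)) (at t within {0..T})"
      using x by (auto intro!: derivative_eq_intros simp: field_simps power4_eq_xxxx power2_eq_square)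
    then show "((\<lambda>t. - exp (- t * x\<^sup>2) / x\<^sup>2) has_vector_derivative exp (- t * x\<^sup>2)) (at t within {0..T})"
      by (simp add: has_real_derivative_iff_has_vector_derivative)
  qed
  then have "((\<lambda>t. exp (- t * x\<^sup>2)) has_integral ((1 - exp (- T * x\<^sup>2)) / x\<^sup>2)) {0..T}"
    by (simp add: diff_divide_distrib)
  from nn_integral_has_integral_lebesgue'[OF _ this] show ?thesis by simp
qed

lemma heat:
  fixes T \<alpha> h :: real assumes T: "T > 0"
  shows "incr_integral FG_heat T \<alpha> h \<le> (\<integral>\<^sup>+\<xi>. ennreal ((1 - cos (\<xi> * h)) * \<bar>\<xi>\<bar> powr (\<alpha> - 2)) \<partial>lborel)"
proof -
  have "incr_integral FG_heat T \<alpha> h = (\<integral>\<^sup>+t. \<integral>\<^sup>+\<xi>. ennreal ((1 - cos (\<xi> * h)) * \<bar>FG_heat t \<xi>\<bar>\<^sup>2 * \<bar>\<xi>\<bar> powr \<alpha>) * indicator {0..T} t \<partial>lborel \<partial>lborel)"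
    unfolding incr_integral_def
    by (intro nn_integral_cong nn_integral_multc[symmetric]) (unfold FG_heat_def, measurable)
  also have "\<dots> = (\<integral>\<^sup>+\<xi>. \<integral>\<^sup>+t. ennreal ((1 - cos (\<xi> * h)) * \<bar>FG_heat t \<xi>\<bar>\<^sup>2 * \<bar>\<xi>\<bar> powr \<alpha>) * indicator {0..T} t \<partial>lborel \<partial>lborel)"
    by (subst lborel_pair.Fubini') (unfold case_prod_unfold FG_heat_def, measurable)
  also have "\<dots> \<le> (\<integral>\<^sup>+\<xi>. ennreal ((1 - cos (\<xi> * h)) * \<bar>\<xi>\<bar> powr (\<alpha> - 2)) \<partial>lborel)"
  proof (rule nn_integral_mono)
    fix \<xi> :: real
    show "(\<integral>\<^sup>+t. ennreal ((1 - cos (\<xi> * h)) * \<bar>FG_heat t \<xi>\<bar>\<^sup>2 * \<bar>\<xi>\<bar> powr \<alpha>) * indicator {0..T} t \<partial>lborel)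
       \<le> ennreal ((1 - cos (\<xi> * h)) * \<bar>\<xi>\<bar> powr (\<alpha> - 2))"
    proof (cases "\<xi> = 0")
      case True then show ?thesis by simp
    next
      case False
      let ?B = "(1 - cos (\<xi> * h)) * \<bar>\<xi>\<bar> powr (\<alpha> - 2)"
      have B0: "0 \<le> ?B" by simp
      have eq: "ennreal ((1 - cos (\<xi> * h)) * \<bar>FG_heat t \<xi>\<bar>\<^sup>2 * \<bar>\<xi>\<bar> powr \<alpha>) * indicator {0..T} t
          = ennreal (?B * \<xi>\<^sup>2) * (ennreal (exp (- t * \<xi>\<^sup>2)) * indicator {0..T} t)" for t
      proof -
        have "\<bar>FG_heat t \<xi>\<bar>\<^sup>2 = exp (- t * \<xi>\<^sup>2)"
          by (simp add: FG_heat_def power2_eq_square exp_add[symmetric])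
        moreover have "\<bar>\<xi>\<bar> powr \<alpha> = \<bar>\<xi>\<bar> powr (\<alpha> - 2) * \<xi>\<^sup>2"
          using False by (simp add: powr_diff)
        ultimately show ?thesis
          by (simp add: ennreal_mult'[symmetric] mult_ac)
      qed
      have "(\<integral>\<^sup>+t. ennreal ((1 - cos (\<xi> * h)) * \<bar>FG_heat t \<xi>\<bar>\<^sup>2 * \<bar>\<xi>\<bar> powr \<alpha>) * indicator {0..T} t \<partial>lborel)
          = ennreal (?B * \<xi>\<^sup>2) * ennreal ((1 - exp (- T * \<xi>\<^sup>2)) / \<xi>\<^sup>2)"
        unfolding eq expint[OF T False, symmetric] by (rule nn_integral_cmult) measurable
      also have "\<dots> = ennreal (?B * \<xi>\<^sup>2 * ((1 - exp (- T * \<xi>\<^sup>2)) / \<xi>\<^sup>2))"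
        using B0 by (simp add: ennreal_mult'[symmetric])
      also have "?B * \<xi>\<^sup>2 * ((1 - exp (- T * \<xi>\<^sup>2)) / \<xi>\<^sup>2) = ?B * (1 - exp (- T * \<xi>\<^sup>2))"
        using False by simp
      also have "\<dots> \<le> ennreal ?B"
        using B0 by (intro ennreal_leI) (simp add: mult_left_le)
      finally show ?thesis .
    qed
  qed
  finally show ?thesis .
qed

theorem lemma3p4:
  fixes T \<alpha> h :: real
  assumes "T > 0" and "-1 < \<alpha>" and "\<alpha> < 1"
  shows "incr_integral FG_wave T \<alpha> h \<le> C_const \<alpha> * ennreal (T * \<bar>h\<bar> powr (1 - \<alpha>)) \<and>
         incr_integral FG_heat T \<alpha> h \<le> C_const \<alpha> * ennreal (\<bar>h\<bar> powr (1 - \<alpha>))"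
proof (cases "h = 0")
  case True
  then show ?thesis by (simp add: incr_integral_def)
next
  case False
  note S = scale[OF False, of \<alpha>]
  have "incr_integral FG_wave T \<alpha> h \<le> C_const \<alpha> * ennreal (\<bar>h\<bar> powr (1 - \<alpha>)) * ennreal T"
    using wave[OF assms(1), of \<alpha> h] unfolding S .
  also have "\<dots> = C_const \<alpha> * ennreal (T * \<bar>h\<bar> powr (1 - \<alpha>))"
    using assms(1) by (simp add: ennreal_mult' mult_ac)
  finally show ?thesis
    using heat[OF assms(1), of \<alpha> h] unfolding S by simp
qed

end
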